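(* Let $\eta=i\pi Q/P$ with positive integers $Q<P$, let $\kappa\in\mathbb{C}$, $n\ge P$, and let $\lambda_1,\dots,\lambda_n,\mu_1,\dots,\mu_n\in\mathbb{C}$ be such that all entries of $\Omega_\kappa(\{\lambda\},\{\mu\}|\{\lambda\})$ are finite. Suppose there are distinct indices $a_1,\dots,a_P$ with $\sinh(\lambda_{a_{j+1}}-\lambda_{a_j}+\eta)=0$ for $j=1,\dots,P$, where $a_{P+1}:=a_1$. Then $\det_n\Omega_\kappa(\{\lambda\},\{\mu\}|\{\lambda\})=0$.
   Context: $\xi_1,\dots,\xi_M\in\mathbb{C}$ are fixed; $a(\lambda)=\prod_{j=1}^M\sinh(\lambda-\xi_j+\eta)$, $d(\lambda)=\prod_{j=1}^M\sinh(\lambda-\xi_j)$, $t(\lambda,\mu)=\frac{\sinh\eta}{\sinh(\lambda-\mu)\sinh(\lambda-\mu+\eta)}$. For sets $\{\lambda_1..\lambda_n\}$, $\{\mu_1..\mu_n\}$, $\{\nu_1..\nu_{n'}\}$, $\Omega_\kappa(\{\lambda\},\{\mu\}|\{\nu\})$ is the $n\times n$ matrix with entries $(\Omega_\kappa)_{jk}=a(\mu_k)t(\lambda_j,\mu_k)\prod_{c=1}^{n'}\sinh(\nu_c-\mu_k+\eta)-\kappa\,d(\mu_k)t(\mu_k,\lambda_j)\prod_{c=1}^{n'}\sinh(\nu_c-\mu_k-\eta)$. *)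

theory Defs
  imports Complex_Main "Jordan_Normal_Form.Determinant"
begin

definition a_fun :: "complex \<Rightarrow> nat \<Rightarrow> (nat \<Rightarrow> complex) \<Rightarrow> complex \<Rightarrow> complex" where
  "a_fun \<eta> M \<xi> x = (\<Prod>j<M. sinh (x - \<xi> j + \<eta>))"

definition d_fun :: "nat \<Rightarrow> (nat \<Rightarrow> complex) \<Rightarrow> complex \<Rightarrow> complex" where
  "d_fun M \<xi> x = (\<Prod>j<M. sinh (x - \<xi> j))"

definition t_fun :: "complex \<Rightarrow> complex \<Rightarrow> complex \<Rightarrow> complex" where
  "t_fun \<eta> x y = sinh \<eta> / (sinh (x - y) * sinh (x - y + \<eta>))"

text \<open>The n x n matrix Omega_kappa({lambda},{mu}|{nu}), nu of size n', all indices 0-based.\<close>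

definition Omega :: "complex \<Rightarrow> nat \<Rightarrow> (nat \<Rightarrow> complex) \<Rightarrow> complex \<Rightarrow> nat \<Rightarrow>
    (nat \<Rightarrow> complex) \<Rightarrow> (nat \<Rightarrow> complex) \<Rightarrow> nat \<Rightarrow> (nat \<Rightarrow> complex) \<Rightarrow> complex mat" where
  "Omega \<eta> M \<xi> \<kappa> n lam \<mu> n' \<nu> = mat n n (\<lambda>(j, k).
      a_fun \<eta> M \<xi> (\<mu> k) * t_fun \<eta> (lam j) (\<mu> k) * (\<Prod>c<n'. sinh (\<nu> c - \<mu> k + \<eta>))
    - \<kappa> * d_fun M \<xi> (\<mu> k) * t_fun \<eta> (\<mu> k) (lam j) * (\<Prod>c<n'. sinh (\<nu> c - \<mu> k - \<eta>)))"

text \<open>All entries finite: no denominator of the t-factors vanishes.\<close>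

definition Omega_entries_finite :: "complex \<Rightarrow> nat \<Rightarrow> (nat \<Rightarrow> complex) \<Rightarrow> (nat \<Rightarrow> complex) \<Rightarrow> bool" where
  "Omega_entries_finite \<eta> n lam \<mu> \<longleftrightarrow>
     (\<forall>j<n. \<forall>k<n. sinh (lam j - \<mu> k) \<noteq> 0 \<and> sinh (lam j - \<mu> k + \<eta>) \<noteq> 0
                  \<and> sinh (\<mu> k - lam j) \<noteq> 0 \<and> sinh (\<mu> k - lam j + \<eta>) \<noteq> 0)"

end

theory Submission
  imports Defs
begin

definition cth :: "complex \<Rightarrow> complex" where "cth z = cosh z / sinh z"

lemma t_as_cth:
  assumes "sinh u \<noteq> 0" "sinh (u + e) \<noteq> 0"
  shows "sinh e / (sinh u * sinh (u + e)) = cth u - cth (u + e)"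
proof -
  have "cosh u * sinh (u + e) - cosh (u + e) * sinh u = sinh e * (cosh u ^ 2 - sinh u ^ 2)"
    by (simp add: sinh_add cosh_add power2_eq_square algebra_simps)
  also have "\<dots> = sinh e" by (simp add: cosh_square_eq)
  finally have h: "cosh u * sinh (u + e) - cosh (u + e) * sinh u = sinh e" .
  show ?thesis using assms unfolding cth_def
    by (simp add: field_simps h[symmetric])
qed

lemma cth_shift:
  assumes "sinh w = 0"
  shows "cth (z + w) = cth z"
proof -
  have "cosh w ^ 2 = 1" using cosh_square_eq[of w] assms by simp
  hence c: "cosh w \<noteq> 0" by auto
  show ?thesis unfolding cth_def using c assms
    by (simp add: sinh_add cosh_add)
qed

lemma cyc_sum:
  fixes g :: "nat \<Rightarrow> complex"
  assumes "0 < P"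
  shows "(\<Sum>j<P. g (Suc j mod P)) = (\<Sum>j<P. g j)"
proof -
  have "bij_betw (\<lambda>j. Suc j mod P) {..<P} {..<P}"
  proof (rule bij_betw_imageI)
    show "inj_on (\<lambda>j. Suc j mod P) {..<P}"
    proof (rule inj_onI)
      fix x y assume "x \<in> {..<P}" "y \<in> {..<P}" "Suc x mod P = Suc y mod P"
      moreover have "\<And>x. x < P \<Longrightarrow> Suc x mod P = (if Suc x = P then 0 else Suc x)"
        by (metis Suc_lessI mod_less mod_self)
      ultimately show "x = y" by (auto split: if_splits)
    qed
    hence "card ((\<lambda>j. Suc j mod P) ` {..<P}) = P" by (simp add: card_image)
    moreover have "(\<lambda>j. Suc j mod P) ` {..<P} \<subseteq> {..<P}" using assms by auto
    ultimately show "(\<lambda>j. Suc j mod P) ` {..<P} = {..<P}"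
      by (metis card_lessThan card_subset_eq finite_lessThan)
  qed
  from sum.reindex_bij_betw[OF this, of g] show ?thesis by simp
qed

theorem mainTheorem5:
  fixes P Q M n :: nat and \<xi> lam \<mu> :: "nat \<Rightarrow> complex" and \<kappa> \<eta> :: complex
    and a :: "nat \<Rightarrow> nat"
  assumes "0 < Q" and "Q < P"
    and "\<eta> = \<i> * complex_of_real pi * of_nat Q / of_nat P"
    and "n \<ge> P"
    and "Omega_entries_finite \<eta> n lam \<mu>"
    and "\<forall>j<P. a j < n"
    and "inj_on a {..<P}"
    and "\<forall>j<P. sinh (lam (a (Suc j mod P)) - lam (a j) + \<eta>) = 0"
  shows "det (Omega \<eta> M \<xi> \<kappa> n lam \<mu> n lam) = 0"
proof -
  define x where "x j = lam (a j)" for j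
  have P0: "0 < P" using assms(1,2) by simp
  have cyc: "\<And>j. j < P \<Longrightarrow> sinh (x (Suc j mod P) - x j + \<eta>) = 0"
    using assms(8) x_def by simp
  have fin: "\<And>j k. j < P \<Longrightarrow> k < n \<Longrightarrow> sinh (x j - \<mu> k) \<noteq> 0 \<and> sinh (x j - \<mu> k + \<eta>) \<noteq> 0
                  \<and> sinh (\<mu> k - x j) \<noteq> 0 \<and> sinh (\<mu> k - x j + \<eta>) \<noteq> 0"
    using assms(5,6) unfolding Omega_entries_finite_def x_def by blast
  have modlt: "\<And>j. Suc j mod P < P" using P0 by simp
  have S1: "(\<Sum>j<P. t_fun \<eta> (x j) (\<mu> k)) = 0" if k: "k < n" for k
  proof -
    have "(\<Sum>j<P. t_fun \<eta> (x j) (\<mu> k)) = (\<Sum>j<P. t_fun \<eta> (x (Suc j mod P)) (\<mu> k))"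
      using cyc_sum[OF P0, of "\<lambda>j. t_fun \<eta> (x j) (\<mu> k)"] by simp
    also have "\<dots> = (\<Sum>j<P. cth (x (Suc j mod P) - \<mu> k) - cth (x j - \<mu> k))"
    proof (rule sum.cong[OF refl])
      fix j assume "j \<in> {..<P}"
      hence j: "j < P" by simp
      have e: "x (Suc j mod P) - \<mu> k + \<eta> = (x j - \<mu> k) + (x (Suc j mod P) - x j + \<eta>)" by simp
      show "t_fun \<eta> (x (Suc j mod P)) (\<mu> k) = cth (x (Suc j mod P) - \<mu> k) - cth (x j - \<mu> k)"
        unfolding t_fun_def
        using t_as_cth[of "x (Suc j mod P) - \<mu> k" \<eta>] fin[OF modlt k] cth_shift[OF cyc[OF j]] e
        by metis
    qed
    also have "\<dots> = 0"
      using cyc_sum[OF P0, of "\<lambda>j. cth (x j - \<mu> k)"] by (simp add: sum_subtractf)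
    finally show ?thesis .
  qed
  have S2: "(\<Sum>j<P. t_fun \<eta> (\<mu> k) (x j)) = 0" if k: "k < n" for k
  proof -
    have "(\<Sum>j<P. t_fun \<eta> (\<mu> k) (x j)) = (\<Sum>j<P. cth (\<mu> k - x j) - cth (\<mu> k - x (Suc j mod P)))"
    proof (rule sum.cong[OF refl])
      fix j assume "j \<in> {..<P}"
      hence j: "j < P" by simp
      have e: "\<mu> k - x j + \<eta> = (\<mu> k - x (Suc j mod P)) + (x (Suc j mod P) - x j + \<eta>)" by simp
      show "t_fun \<eta> (\<mu> k) (x j) = cth (\<mu> k - x j) - cth (\<mu> k - x (Suc j mod P))"
        unfolding t_fun_def
        using t_as_cth[of "\<mu> k - x j" \<eta>] fin[OF j k] cth_shift[OF cyc[OF j]] e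
        by metis
    qed
    also have "\<dots> = 0"
      using cyc_sum[OF P0, of "\<lambda>j. cth (\<mu> k - x j)"] by (simp add: sum_subtractf)
    finally show ?thesis .
  qed
  define A where "A = Omega \<eta> M \<xi> \<kappa> n lam \<mu> n lam"
  have Ac: "A \<in> carrier_mat n n" unfolding A_def Omega_def by simp
  have AT: "transpose_mat A \<in> carrier_mat n n" using Ac by simp
  define S where "S = a ` {..<P}"
  have Ssub: "S \<subseteq> {0..<n}" using assms(6) S_def by auto
  define v where "v = vec n (\<lambda>i. if i \<in> S then (1::complex) else 0)"
  have vc: "v \<in> carrier_vec n" unfolding v_def by simp
  have vnz: "v \<noteq> 0\<^sub>v n"
  proof
    assume "v = 0\<^sub>v n"
    hence "v $ (a 0) = 0" using assms(6) P0 by simp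
    moreover have "v $ (a 0) = 1" using assms(6) P0 unfolding v_def S_def by simp
    ultimately show False by simp
  qed
  have "transpose_mat A *\<^sub>v v = 0\<^sub>v n"
  proof (rule eq_vecI)
    show "dim_vec (transpose_mat A *\<^sub>v v) = dim_vec (0\<^sub>v n)" using Ac by simp
    fix k assume "k < dim_vec (0\<^sub>v n)"
    hence k: "k < n" by simp
    have "(transpose_mat A *\<^sub>v v) $ k = (\<Sum>i\<in>{0..<n}. A $$ (i, k) * v $ i)"
      using Ac k unfolding mult_mat_vec_def scalar_prod_def v_def by (simp add: row_transpose)
    also have "\<dots> = (\<Sum>i\<in>S. A $$ (i, k))"
    proof -
      have "(\<Sum>i\<in>{0..<n}. A $$ (i, k) * v $ i) = (\<Sum>i\<in>{0..<n}. if i \<in> S then A $$ (i, k) else 0)"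
        by (rule sum.cong) (auto simp: v_def)
      also have "\<dots> = (\<Sum>i\<in>S. A $$ (i, k))"
        using Ssub by (simp add: sum.If_cases Int_absorb1)
      finally show ?thesis .
    qed
    also have "\<dots> = (\<Sum>j<P. A $$ (a j, k))"
      unfolding S_def using assms(7) by (simp add: sum.reindex)
    also have "\<dots> = (\<Sum>j<P. a_fun \<eta> M \<xi> (\<mu> k) * (\<Prod>c<n. sinh (lam c - \<mu> k + \<eta>)) * t_fun \<eta> (x j) (\<mu> k)
        - \<kappa> * d_fun M \<xi> (\<mu> k) * (\<Prod>c<n. sinh (lam c - \<mu> k - \<eta>)) * t_fun \<eta> (\<mu> k) (x j))"
      by (rule sum.cong[OF refl]) (use assms(6) k in \<open>auto simp: A_def Omega_def x_def\<close>)
    also have "\<dots> = 0"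
      using S1[OF k] S2[OF k] by (simp add: sum_subtractf sum_distrib_left[symmetric])
    finally show "(transpose_mat A *\<^sub>v v) $ k = 0\<^sub>v n $ k" using k by simp
  qed
  hence "det (transpose_mat A) = 0"
    using det_0_iff_vec_prod_zero[OF AT] vc vnz by blast
  thus ?thesis using det_transpose[OF Ac] A_def by simp
qed

end
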